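(* Let $G$ be a compact Hausdorff topological group and $X$ a $G$-connected Hausdorff $G$-space. If $H=G_z$ is the isotropy group of some point $z\in X$, then $\mathrm{cat}_H(X)\le\mathbf{TC}_G(X)$.
   Context: $G_z=\{g\in G: gz=z\}$. $X$ is $G$-connected if $X^K=\{x: kx=x\ \forall k\in K\}$ is path-connected for every closed subgroup $K$. For a compact group $\Gamma$ acting on $Y$: a $\Gamma$-homotopy is an equivariant homotopy with trivial action on $I$; an invariant set is $\Gamma$-categorical if its inclusion is $\Gamma$-homotopic to a map into a single $\Gamma$-orbit; $\mathrm{cat}_\Gamma(Y)$ is the least number of open $\Gamma$-categorical sets covering $Y$. $\mathbf{TC}_G(X)$ is the least $k$ such that $X\times X$ (diagonal action) is covered by $k$ $G$-invariant open sets $U_i$ each admitting a $G$-map $s\colon U_i\to X^I$ with $\pi s$ $G$-homotopic to the inclusion ($\infty$ if none); $X^I$ is the path space (compact-open topology, action $(g\gamma)(t)=g\gamma(t)$), $\pi(\gamma)=(\gamma(0),\gamma(1))$. *)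

theory Defs
  imports "HOL-Analysis.Analysis" "HOL-Algebra.Group"
begin

definition topological_group :: "('g, 'm) monoid_scheme \<Rightarrow> 'g topology \<Rightarrow> bool" where
  "topological_group G TG \<longleftrightarrow>
     group G \<and> topspace TG = carrier G \<and>
     continuous_map (prod_topology TG TG) TG (\<lambda>(g, h). g \<otimes>\<^bsub>G\<^esub> h) \<and>
     continuous_map TG TG (\<lambda>g. inv\<^bsub>G\<^esub> g)"

definition G_space :: "('g, 'm) monoid_scheme \<Rightarrow> 'g topology \<Rightarrow> 'x topology
                        \<Rightarrow> ('g \<Rightarrow> 'x \<Rightarrow> 'x) \<Rightarrow> bool" where
  "G_space G TG X act \<longleftrightarrow>
     continuous_map (prod_topology TG X) X (\<lambda>(g, x). act g x) \<and>
     (\<forall>x\<in>topspace X. act \<one>\<^bsub>G\<^esub> x = x) \<and>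
     (\<forall>g\<in>carrier G. \<forall>h\<in>carrier G. \<forall>x\<in>topspace X.
        act (g \<otimes>\<^bsub>G\<^esub> h) x = act g (act h x))"

definition isotropy :: "('g, 'm) monoid_scheme \<Rightarrow> ('g \<Rightarrow> 'x \<Rightarrow> 'x) \<Rightarrow> 'x \<Rightarrow> 'g set" where
  "isotropy G act z = {g \<in> carrier G. act g z = z}"

definition fixed_set :: "'x topology \<Rightarrow> ('g \<Rightarrow> 'x \<Rightarrow> 'x) \<Rightarrow> 'g set \<Rightarrow> 'x set" where
  "fixed_set X act K = {x \<in> topspace X. \<forall>k\<in>K. act k x = x}"

definition G_connected :: "('g, 'm) monoid_scheme \<Rightarrow> 'g topology \<Rightarrow> 'x topology
                            \<Rightarrow> ('g \<Rightarrow> 'x \<Rightarrow> 'x) \<Rightarrow> bool" where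
  "G_connected G TG X act \<longleftrightarrow>
     (\<forall>K. subgroup K G \<and> closedin TG K \<longrightarrow> path_connectedin X (fixed_set X act K))"

definition invariant_set :: "'g set \<Rightarrow> ('g \<Rightarrow> 'y \<Rightarrow> 'y) \<Rightarrow> 'y set \<Rightarrow> bool" where
  "invariant_set \<Gamma> act U \<longleftrightarrow> (\<forall>\<gamma>\<in>\<Gamma>. \<forall>u\<in>U. act \<gamma> u \<in> U)"

definition equivariant_on :: "'g set \<Rightarrow> ('g \<Rightarrow> 'a \<Rightarrow> 'a) \<Rightarrow> ('g \<Rightarrow> 'b \<Rightarrow> 'b)
                               \<Rightarrow> 'a set \<Rightarrow> ('a \<Rightarrow> 'b) \<Rightarrow> bool" where
  "equivariant_on \<Gamma> act1 act2 U f \<longleftrightarrow> (\<forall>\<gamma>\<in>\<Gamma>. \<forall>u\<in>U. f (act1 \<gamma> u) = act2 \<gamma> (f u))"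

text \<open>\<Gamma>-homotopy between maps defined on an invariant subset U of a \<Gamma>-space:
a homotopy all of whose stages are equivariant (trivial action on I).\<close>
definition G_homotopic :: "'g set \<Rightarrow> ('g \<Rightarrow> 'a \<Rightarrow> 'a) \<Rightarrow> ('g \<Rightarrow> 'b \<Rightarrow> 'b)
                            \<Rightarrow> 'a topology \<Rightarrow> 'b topology \<Rightarrow> ('a \<Rightarrow> 'b) \<Rightarrow> ('a \<Rightarrow> 'b) \<Rightarrow> bool" where
  "G_homotopic \<Gamma> act1 act2 A B f g \<longleftrightarrow>
     homotopic_with (equivariant_on \<Gamma> act1 act2 (topspace A)) A B f g"

definition orbit :: "'g set \<Rightarrow> ('g \<Rightarrow> 'y \<Rightarrow> 'y) \<Rightarrow> 'y \<Rightarrow> 'y set" where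
  "orbit \<Gamma> act y = {act \<gamma> y | \<gamma>. \<gamma> \<in> \<Gamma>}"

definition G_categorical :: "'g set \<Rightarrow> 'y topology \<Rightarrow> ('g \<Rightarrow> 'y \<Rightarrow> 'y) \<Rightarrow> 'y set \<Rightarrow> bool" where
  "G_categorical \<Gamma> Y act U \<longleftrightarrow>
     invariant_set \<Gamma> act U \<and> U \<subseteq> topspace Y \<and>
     (\<exists>f y0. y0 \<in> topspace Y \<and> f ` U \<subseteq> orbit \<Gamma> act y0 \<and>
            G_homotopic \<Gamma> act act (subtopology Y U) Y id f)"

definition G_cat :: "'g set \<Rightarrow> 'y topology \<Rightarrow> ('g \<Rightarrow> 'y \<Rightarrow> 'y) \<Rightarrow> enat" where
  "G_cat \<Gamma> Y act = Inf {enat k | k. \<exists>U :: nat \<Rightarrow> 'y set.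
      (\<forall>i<k. openin Y (U i) \<and> G_categorical \<Gamma> Y act (U i)) \<and>
      topspace Y \<subseteq> (\<Union>i<k. U i)}"

text \<open>Paths in X, as functions on [0,1] (extended by undefined elsewhere).\<close>
definition paths :: "'x topology \<Rightarrow> (real \<Rightarrow> 'x) set" where
  "paths X = {\<gamma>. pathin X \<gamma> \<and> \<gamma> \<in> extensional {0..1}}"

definition path_space :: "'x topology \<Rightarrow> (real \<Rightarrow> 'x) topology" where
  "path_space X = subtopology
     (topology_generated_by
        {{\<gamma> \<in> paths X. \<gamma> ` K \<subseteq> V} | K V.
            compactin (top_of_set {0..1::real}) K \<and> openin X V})
     (paths X)"

definition path_act :: "('g \<Rightarrow> 'x \<Rightarrow> 'x) \<Rightarrow> 'g \<Rightarrow> (real \<Rightarrow> 'x) \<Rightarrow> (real \<Rightarrow> 'x)" where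
  "path_act act g \<gamma> = restrict (\<lambda>t. act g (\<gamma> t)) {0..1}"

definition diag_act :: "('g \<Rightarrow> 'x \<Rightarrow> 'x) \<Rightarrow> 'g \<Rightarrow> 'x \<times> 'x \<Rightarrow> 'x \<times> 'x" where
  "diag_act act g p = (act g (fst p), act g (snd p))"

definition endpoints :: "(real \<Rightarrow> 'x) \<Rightarrow> 'x \<times> 'x" where
  "endpoints \<gamma> = (\<gamma> 0, \<gamma> 1)"

definition TC_domain :: "'g set \<Rightarrow> 'x topology \<Rightarrow> ('g \<Rightarrow> 'x \<Rightarrow> 'x) \<Rightarrow> ('x \<times> 'x) set \<Rightarrow> bool" where
  "TC_domain \<Gamma> X act U \<longleftrightarrow>
     openin (prod_topology X X) U \<and> invariant_set \<Gamma> (diag_act act) U \<and>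
     (\<exists>s. continuous_map (subtopology (prod_topology X X) U) (path_space X) s \<and>
          equivariant_on \<Gamma> (diag_act act) (path_act act) U s \<and>
          G_homotopic \<Gamma> (diag_act act) (diag_act act)
             (subtopology (prod_topology X X) U) (prod_topology X X) (endpoints \<circ> s) id)"

definition TC_G :: "'g set \<Rightarrow> 'x topology \<Rightarrow> ('g \<Rightarrow> 'x \<Rightarrow> 'x) \<Rightarrow> enat" where
  "TC_G \<Gamma> X act = Inf {enat k | k. \<exists>U :: nat \<Rightarrow> ('x \<times> 'x) set.
      (\<forall>i<k. TC_domain \<Gamma> X act (U i)) \<and>
      topspace (prod_topology X X) \<subseteq> (\<Union>i<k. U i)}"

end

theory Submission
  imports Defs
begin

lemma eval_cont:
  assumes s: "continuous_map Y (path_space X) s"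
  shows "continuous_map (prod_topology (top_of_set {0..1}) Y) X (\<lambda>(t,y). s y t)"
  unfolding continuous_map_eq_topcontinuous_at topcontinuous_at_def
proof (intro ballI conjI allI impI)
  have sp: "\<And>y. y \<in> topspace Y \<Longrightarrow> s y \<in> paths X"
    using continuous_map_image_subset_topspace[OF s] by (auto simp: path_space_def)
  have pin: "\<And>y t. y \<in> topspace Y \<Longrightarrow> t \<in> {0..1} \<Longrightarrow> s y t \<in> topspace X"
    using sp by (fastforce simp: paths_def pathin_def continuous_map_def Pi_iff)
  show "(\<lambda>(t, y). s y t) \<in> topspace (prod_topology (top_of_set {0..1}) Y) \<rightarrow> topspace X"
    using pin by auto
  fix p V assume p: "p \<in> topspace (prod_topology (top_of_set {0..1::real}) Y)"
    and V: "openin X V \<and> (case p of (t, y) \<Rightarrow> s y t) \<in> V"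
  obtain t0 y0 where p0: "p = (t0, y0)" and t0: "t0 \<in> {0..1}" and y0: "y0 \<in> topspace Y"
    using p by auto
  let ?g = "s y0"
  have gc: "continuous_map (top_of_set {0..1}) X ?g"
    using sp[OF y0] by (simp add: paths_def pathin_def)
  have "openin (top_of_set {0..1::real}) {t \<in> {0..1}. ?g t \<in> V}"
    using openin_continuous_map_preimage[OF gc, of V] V by simp
  moreover have "t0 \<in> {t \<in> {0..1}. ?g t \<in> V}" using V p0 t0 by simp
  ultimately obtain d where d: "d > 0" "\<And>t. t \<in> {0..1} \<Longrightarrow> dist t t0 < d \<Longrightarrow> ?g t \<in> V"
    unfolding openin_euclidean_subtopology_iff by force
  define K where "K = cball t0 (d/2) \<inter> {0..1}"
  have Kc: "compactin (top_of_set {0..1::real}) K"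
    unfolding K_def compactin_subtopology by (auto intro: compact_Int_closed)
  define B where "B = {\<gamma> \<in> paths X. \<gamma> ` K \<subseteq> V}"
  have "openin (path_space X) B"
  proof -
    have "openin (topology_generated_by
        {{\<gamma> \<in> paths X. \<gamma> ` K \<subseteq> V} | K V.
            compactin (top_of_set {0..1::real}) K \<and> openin X V}) B"
      unfolding B_def using Kc V by (intro topology_generated_by_Basis) blast
    moreover have "B = B \<inter> paths X" unfolding B_def by blast
    ultimately show ?thesis unfolding path_space_def openin_subtopology by blast
  qed
  then have OY: "openin Y {y \<in> topspace Y. s y \<in> B}"
    using openin_continuous_map_preimage[OF s] by blast
  have OT: "openin (top_of_set {0..1::real}) (ball t0 (d/2) \<inter> {0..1})"
    by (metis openin_open_Int open_ball inf_commute)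
  show "\<exists>U. openin (prod_topology (top_of_set {0..1}) Y) U \<and> p \<in> U \<and>
           (\<forall>y\<in>U. (case y of (t, y) \<Rightarrow> s y t) \<in> V)"
  proof (intro exI conjI)
    show "openin (prod_topology (top_of_set {0..1}) Y) ((ball t0 (d/2) \<inter> {0..1}) \<times> {y \<in> topspace Y. s y \<in> B})"
      using OY OT by (simp add: openin_prod_Times_iff)
    have "?g \<in> B" unfolding B_def K_def using sp[OF y0] d
      by (auto simp: dist_commute)
    then show "p \<in> (ball t0 (d/2) \<inter> {0..1}) \<times> {y \<in> topspace Y. s y \<in> B}"
      using p0 t0 y0 d by auto
    show "\<forall>q\<in>(ball t0 (d/2) \<inter> {0..1}) \<times> {y \<in> topspace Y. s y \<in> B}. (case q of (t, y) \<Rightarrow> s y t) \<in> V"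
      unfolding B_def K_def by auto
  qed
qed (use continuous_map_image_subset_topspace in auto)

lemma domain_cat:
  assumes U: "TC_domain (carrier G) X act U"
    and z: "z \<in> topspace X"
    and H: "H \<subseteq> carrier G" "\<And>h. h \<in> H \<Longrightarrow> act h z = z" "\<one>\<^bsub>G\<^esub> \<in> H"
    and actz: "act \<one>\<^bsub>G\<^esub> z = z"
    and actX: "\<And>g x. g \<in> carrier G \<Longrightarrow> x \<in> topspace X \<Longrightarrow> act g x \<in> topspace X"
  shows "openin X {x \<in> topspace X. (z,x) \<in> U} \<and> G_categorical H X act {x \<in> topspace X. (z,x) \<in> U}"
proof -
  define V where "V = {x \<in> topspace X. (z,x) \<in> U}"
  let ?XX = "prod_topology X X"
  let ?A = "subtopology X V"
  define j where "j = (\<lambda>x::'b. (z,x))"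
  from U obtain s where oU: "openin ?XX U" and iU: "invariant_set (carrier G) (diag_act act) U"
    and sc: "continuous_map (subtopology ?XX U) (path_space X) s"
    and se: "equivariant_on (carrier G) (diag_act act) (path_act act) U s"
    and sh: "G_homotopic (carrier G) (diag_act act) (diag_act act)
             (subtopology ?XX U) ?XX (endpoints \<circ> s) id"
    unfolding TC_domain_def by blast
  have Usub: "U \<subseteq> topspace ?XX" using openin_subset[OF oU] .
  have topA: "topspace ?A = V" by (auto simp: V_def)
  have jc0: "continuous_map X ?XX j"
    unfolding j_def continuous_map_pairwise by (auto simp: o_def z)
  have jc: "continuous_map ?A (subtopology ?XX U) j"
    unfolding continuous_map_in_subtopology
    using continuous_map_from_subtopology[OF jc0] by (auto simp: V_def j_def)
  have oV: "openin X V"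
    using openin_continuous_map_preimage[OF jc0 oU] by (simp add: V_def j_def)
  have invV: "invariant_set H act V"
    unfolding invariant_set_def V_def
  proof (intro ballI, clarify)
    fix h x assume h: "h \<in> H" and x: "x \<in> topspace X" "(z,x) \<in> U"
    have "diag_act act h (z,x) \<in> U" using iU h H(1) x unfolding invariant_set_def by blast
    then show "act h x \<in> topspace X \<and> (z, act h x) \<in> U"
      using actX[of h x] h H x by (auto simp: diag_act_def)
  qed
  let ?P = "equivariant_on H act act V"
  have sj: "\<And>h x. h \<in> H \<Longrightarrow> x \<in> V \<Longrightarrow> s (z, act h x) = path_act act h (s (z,x))"
  proof -
    fix h x assume h: "h \<in> H" and x: "x \<in> V"
    have "s (diag_act act h (z,x)) = path_act act h (s (z,x))"
      using se h H(1) x unfolding equivariant_on_def V_def by blast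
    then show "s (z, act h x) = path_act act h (s (z,x))" using H(2)[OF h] by (simp add: diag_act_def)
  qed
  have hom1: "homotopic_with (equivariant_on H act (diag_act act) V) ?A ?XX
       ((endpoints \<circ> s) \<circ> j) (id \<circ> j)"
  proof (rule homotopic_with_compose_continuous_map_right[OF sh[unfolded G_homotopic_def] jc])
    fix k assume k: "equivariant_on (carrier G) (diag_act act) (diag_act act) (topspace (subtopology ?XX U)) k"
    show "equivariant_on H act (diag_act act) V (k \<circ> j)"
      unfolding equivariant_on_def
    proof (intro ballI)
      fix h x assume h: "h \<in> H" and x: "x \<in> V"
      have "k (diag_act act h (z,x)) = diag_act act h (k (z,x))"
        using k h H(1) x Usub unfolding equivariant_on_def V_def by auto
      then show "(k \<circ> j) (act h x) = diag_act act h ((k \<circ> j) x)"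
        using H(2)[OF h] by (simp add: diag_act_def j_def)
    qed
  qed
  have homb: "homotopic_with ?P ?A X (\<lambda>x. s (z,x) 1) id"
  proof -
    have "homotopic_with ?P ?A X (snd \<circ> ((endpoints \<circ> s) \<circ> j)) (snd \<circ> (id \<circ> j))"
      by (rule homotopic_with_compose_continuous_map_left[OF hom1 continuous_map_snd])
        (auto simp: equivariant_on_def diag_act_def)
    moreover have "snd \<circ> ((endpoints \<circ> s) \<circ> j) = (\<lambda>x. s (z,x) 1)" "snd \<circ> (id \<circ> j) = id"
      by (auto simp: j_def endpoints_def fun_eq_iff)
    ultimately show ?thesis by simp
  qed
  have homa: "homotopic_with ?P ?A X (\<lambda>x. s (z,x) 0) (\<lambda>x. z)"
  proof -
    have "homotopic_with ?P ?A X (fst \<circ> ((endpoints \<circ> s) \<circ> j)) (fst \<circ> (id \<circ> j))"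
      by (rule homotopic_with_compose_continuous_map_left[OF hom1 continuous_map_fst])
        (auto simp: equivariant_on_def diag_act_def)
    moreover have "fst \<circ> ((endpoints \<circ> s) \<circ> j) = (\<lambda>x. s (z,x) 0)" "fst \<circ> (id \<circ> j) = (\<lambda>x. z)"
      by (auto simp: j_def endpoints_def fun_eq_iff)
    ultimately show ?thesis by simp
  qed
  have homab: "homotopic_with ?P ?A X (\<lambda>x. s (z,x) 0) (\<lambda>x. s (z,x) 1)"
    unfolding homotopic_with_def
  proof (intro exI conjI allI ballI)
    have "continuous_map ?A (path_space X) (s \<circ> j)"
      using continuous_map_compose[OF jc sc] .
    from eval_cont[OF this]
    show "continuous_map (prod_topology (top_of_set {0..1}) ?A) X (\<lambda>(t,x). s (z,x) t)"
      by (simp add: j_def)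
    fix t :: real assume t: "t \<in> {0..1}"
    show "?P (\<lambda>x. (\<lambda>(t, x). s (z, x) t) (t, x))"
      unfolding equivariant_on_def using sj t by (auto simp: path_act_def)
  qed auto
  have "homotopic_with ?P ?A X id (\<lambda>x. z)"
    using homotopic_with_trans[OF homotopic_with_symD[OF homb] homotopic_with_trans[OF homotopic_with_symD[OF homab] homa]] .
  then have GH: "G_homotopic H act act ?A X id (\<lambda>x. z)"
    unfolding G_homotopic_def topA .
  have orb: "(\<lambda>x. z) ` V \<subseteq> orbit H act z"
    unfolding orbit_def using H(3) actz by force
  show ?thesis
    unfolding V_def[symmetric] G_categorical_def
    using oV invV GH orb z by (auto simp: V_def)
qed

theorem proposition5p7:
  fixes G :: "('g, 'm) monoid_scheme" and TG :: "'g topology"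
    and X :: "'x topology" and act :: "'g \<Rightarrow> 'x \<Rightarrow> 'x" and z :: 'x
  assumes "topological_group G TG" and "compact_space TG" and "Hausdorff_space TG"
    and "G_space G TG X act" and "Hausdorff_space X" and "G_connected G TG X act"
    and "z \<in> topspace X"
  shows "G_cat (isotropy G act z) X act \<le> TC_G (carrier G) X act"
proof -
  let ?H = "isotropy G act z"
  have tg: "group G" "topspace TG = carrier G" using assms(1) by (auto simp: topological_group_def)
  have cm: "continuous_map (prod_topology TG X) X (\<lambda>(g, x). act g x)"
    and one: "\<And>x. x \<in> topspace X \<Longrightarrow> act \<one>\<^bsub>G\<^esub> x = x"
    using assms(4) by (auto simp: G_space_def)
  have actX: "\<And>g x. g \<in> carrier G \<Longrightarrow> x \<in> topspace X \<Longrightarrow> act g x \<in> topspace X"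
  proof -
    fix g x assume "g \<in> carrier G" "x \<in> topspace X"
    then have "(g,x) \<in> topspace (prod_topology TG X)" using tg by simp
    from continuous_map_image_subset_topspace[OF cm] this show "act g x \<in> topspace X" by force
  qed
  have actz: "act \<one>\<^bsub>G\<^esub> z = z" using one assms(7) .
  have H: "?H \<subseteq> carrier G" "\<And>h. h \<in> ?H \<Longrightarrow> act h z = z" "\<one>\<^bsub>G\<^esub> \<in> ?H"
    using actz group.is_monoid[OF tg(1)] by (auto simp: isotropy_def monoid.one_closed)
  show ?thesis
    unfolding G_cat_def TC_G_def
  proof (rule Inf_superset_mono, clarify)
    fix k and U :: "nat \<Rightarrow> ('x \<times> 'x) set"
    assume D: "\<forall>i<k. TC_domain (carrier G) X act (U i)"
      and C: "topspace (prod_topology X X) \<subseteq> (\<Union>i<k. U i)"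
    show "\<exists>ka. enat k = enat ka \<and> (\<exists>U. (\<forall>i<ka. openin X (U i) \<and> G_categorical ?H X act (U i)) \<and>
              topspace X \<subseteq> (\<Union>i<ka. U i))"
    proof (intro exI conjI allI impI)
      show "enat k = enat k" ..
      fix i assume "i < k"
      from domain_cat[OF D[rule_format, OF this] assms(7) H actz actX]
      show "openin X {x \<in> topspace X. (z,x) \<in> U i}" "G_categorical ?H X act {x \<in> topspace X. (z,x) \<in> U i}"
        by auto
    next
      show "topspace X \<subseteq> (\<Union>i<k. {x \<in> topspace X. (z,x) \<in> U i})"
        using C assms(7) by auto
    qed
  qed
qed
end
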